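(* Let $r_o>0$, $\tau>0$, $\kappa>0$, $\alpha>0$ and $\beta\in(0,1)$ be constants. For $m<0$, let $u_m:[0,\infty)\to[r_o,\infty)$ be the solution of $$u_m(0)=r_o,\qquad u_m'(s)=\left(1-\frac{2m}{u_m(s)}+\kappa^2u_m^2(s)\right)^{1/2},$$ and set $$k=\tau\left(1-\frac{2m}{r_o}+\kappa^2r_o^2\right)^{-1/2}.$$ (i) For every $m<0$ with $k^2<\beta$, there exists a positive constant $A_o$ such that $$(\beta-k^2)+\left[3\kappa^2(1-k^2)-\tfrac12\alpha A_o^{-2}\right]u_m^2(A_ok)=0.$$ (ii) The set of all such $A_o$ is bounded from above and bounded away from zero as $m\to-\infty$. *)

theory Defs
  imports "HOL-Analysis.Analysis"
begin

definition kconst :: "real \<Rightarrow> real \<Rightarrow> real \<Rightarrow> real \<Rightarrow> real" where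
  "kconst r\<^sub>o \<tau> \<kappa> m = \<tau> * (1 - 2*m/r\<^sub>o + \<kappa>^2 * r\<^sub>o^2) powr (-1/2)"

end

theory Submission
  imports Defs
begin

lemma kc_sq: assumes "r>0" "m<0" shows "(kconst r t c m)^2 = t^2 / (1 - 2*m/r + c^2*r^2)"
proof -
  define b where "b = 1 - 2*m/r + c^2*r^2"
  have "m/r < 0" using assms by (simp add: divide_neg_pos)
  moreover have "c^2*r^2 \<ge> 0" by simp
  ultimately have b: "b > 0" unfolding b_def by linarith
  have "(b powr (-1/2))^2 = b powr (-1)"
    using b by (simp add: powr_powr flip: powr_realpow)
  also have "\<dots> = 1/b" using b by (simp add: powr_minus divide_inverse)
  finally show ?thesis unfolding kconst_def b_def[symmetric] by (simp add: power_mult_distrib)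
qed

lemma kc_pos: assumes "r>0" "m<0" "t>0" shows "kconst r t c m > 0"
proof -
  have "m/r < 0" using assms by (simp add: divide_neg_pos)
  moreover have "c^2*r^2 \<ge> 0" by simp
  ultimately have b: "1 - 2*m/r + c^2*r^2 > 0" by linarith
  then show ?thesis using assms unfolding kconst_def by simp
qed

lemma pm2: "(A::real)>0 \<Longrightarrow> A powr (-2) = 1/A^2"
  by (simp add: powr_minus divide_inverse)

lemma sqrt_sq_bounds:
  fixes A X :: real
  assumes "A > 0" "X > 0"
  shows "A^2 < X \<Longrightarrow> A < sqrt X" and "X \<le> A^2 \<Longrightarrow> sqrt X \<le> A"
  using assms real_less_rsqrt real_sqrt_le_iff by (metis real_sqrt_abs abs_of_pos)+

theorem lemma4p1:
  fixes r\<^sub>o \<tau> \<kappa> \<alpha> \<beta> :: real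
    and u :: "real \<Rightarrow> real \<Rightarrow> real"
  assumes "r\<^sub>o > 0" "\<tau> > 0" "\<kappa> > 0" "\<alpha> > 0" "0 < \<beta>" "\<beta> < 1"
    and u_init: "\<And>m. m < 0 \<Longrightarrow> u m 0 = r\<^sub>o"
    and u_range: "\<And>m s. m < 0 \<Longrightarrow> s \<ge> 0 \<Longrightarrow> u m s \<ge> r\<^sub>o"
    and u_ode: "\<And>m s. m < 0 \<Longrightarrow> s \<ge> 0 \<Longrightarrow>
      (u m has_real_derivative (1 - 2*m / u m s + \<kappa>^2 * (u m s)^2) powr (1/2)) (at s within {0..})"
  shows "(\<forall>m<0. (kconst r\<^sub>o \<tau> \<kappa> m)^2 < \<beta> \<longrightarrow>
            (\<exists>A\<^sub>o>0. (\<beta> - (kconst r\<^sub>o \<tau> \<kappa> m)^2)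
                 + (3*\<kappa>^2*(1 - (kconst r\<^sub>o \<tau> \<kappa> m)^2) - 1/2 * \<alpha> * A\<^sub>o powr (-2))
                   * (u m (A\<^sub>o * kconst r\<^sub>o \<tau> \<kappa> m))^2 = 0))
       \<and> (\<exists>c C. 0 < c \<and>
            (\<forall>\<^sub>F m in at_bot. \<forall>A\<^sub>o>0.
               (\<beta> - (kconst r\<^sub>o \<tau> \<kappa> m)^2)
                 + (3*\<kappa>^2*(1 - (kconst r\<^sub>o \<tau> \<kappa> m)^2) - 1/2 * \<alpha> * A\<^sub>o powr (-2))
                   * (u m (A\<^sub>o * kconst r\<^sub>o \<tau> \<kappa> m))^2 = 0
               \<longrightarrow> c \<le> A\<^sub>o \<and> A\<^sub>o \<le> C))"
proof
  note pos = assms(1-6)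
  show "\<forall>m<0. (kconst r\<^sub>o \<tau> \<kappa> m)^2 < \<beta> \<longrightarrow>
            (\<exists>A\<^sub>o>0. (\<beta> - (kconst r\<^sub>o \<tau> \<kappa> m)^2)
                 + (3*\<kappa>^2*(1 - (kconst r\<^sub>o \<tau> \<kappa> m)^2) - 1/2 * \<alpha> * A\<^sub>o powr (-2))
                   * (u m (A\<^sub>o * kconst r\<^sub>o \<tau> \<kappa> m))^2 = 0)"
  proof (intro allI impI)
    fix m :: real assume m: "m < 0" and kb: "(kconst r\<^sub>o \<tau> \<kappa> m)^2 < \<beta>"
    define k where "k = kconst r\<^sub>o \<tau> \<kappa> m"
    have k: "k > 0" unfolding k_def using kc_pos pos m by blast
    have k2: "k^2 < 1" using kb pos unfolding k_def by simp
    define c1 where "c1 = 3*\<kappa>^2*(1 - k^2)"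
    have c1: "c1 > 0" "c1 \<le> 3*\<kappa>^2" unfolding c1_def using k2 pos by (simp_all add: k)
    define D where "D = 3*\<kappa>^2 + \<beta>/r\<^sub>o^2 + 1"
    have "\<beta>/r\<^sub>o^2 > 0" "\<kappa>^2 > 0" using pos by simp_all
    hence D: "D > 0" "D > c1" using c1 unfolding D_def by linarith+
    define a where "a = sqrt (\<alpha>/(2*D))"
    define b where "b = sqrt (\<alpha>/c1)"
    have a: "a > 0" "a^2 = \<alpha>/(2*D)" unfolding a_def using D pos by simp_all
    have b: "b > 0" "b^2 = \<alpha>/c1" unfolding b_def using c1 pos by simp_all
    have "\<alpha>/(2*D) < \<alpha>/c1" using D c1 pos by (simp add: frac_less2)
    hence ab: "a \<le> b" unfolding a_def b_def by simp
    define F where "F = (\<lambda>A. (\<beta> - k^2) + (c1 - 1/2 * \<alpha> * A powr (-2)) * (u m (A * k))^2)"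
    have cu: "continuous_on {0..} (u m)"
      by (auto simp: continuous_on_eq_continuous_within intro: DERIV_continuous u_ode[OF m])
    have cont: "continuous_on {a..b} F"
    proof -
      have "continuous_on {a..b} (\<lambda>A. (\<beta> - k^2) + (c1 - 1/2 * \<alpha> * (1/A^2)) * (u m (A * k))^2)"
        using a(1)
        by (intro continuous_intros continuous_on_compose2[OF cu]) (auto simp: k less_imp_le)
      then show ?thesis
      proof (rule continuous_on_eq)
        fix A assume "A \<in> {a..b}"
        hence "A > 0" using a(1) by simp
        show "\<beta> - k^2 + (c1 - 1/2 * \<alpha> * (1/A^2)) * (u m (A * k))^2 = F A"
          unfolding F_def pm2[OF \<open>A > 0\<close>] by (rule refl)
      qed
    qed
    have Fa: "F a \<le> 0"
    proof -
      have ua: "u m (a*k) \<ge> r\<^sub>o" using u_range[OF m] a k by simp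
      have e: "1/2*\<alpha>*a powr (-2) = D" using a pos D by (simp add: pm2)
      have "c1 - D \<le> -(\<beta>/r\<^sub>o^2 + 1)" unfolding D_def using c1(2) by simp
      hence co: "c1 - 1/2*\<alpha>*a powr (-2) \<le> -(\<beta>/r\<^sub>o^2 + 1)" by (simp only: e)
      have "r\<^sub>o^2 \<le> (u m (a*k))^2" using ua pos by (simp add: power_mono)
      have s1: "(c1 - 1/2*\<alpha>*a powr (-2)) * (u m (a*k))^2 \<le> -(\<beta>/r\<^sub>o^2 + 1) * (u m (a*k))^2"
        using co by (rule mult_right_mono) simp
      have "0 \<le> \<beta>/r\<^sub>o^2" using pos by simp
      hence s2: "-(\<beta>/r\<^sub>o^2 + 1) * (u m (a*k))^2 \<le> -(\<beta>/r\<^sub>o^2 + 1) * r\<^sub>o^2"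
        using \<open>r\<^sub>o^2 \<le> (u m (a*k))^2\<close> by (intro mult_left_mono_neg) auto
      have "(c1 - 1/2*\<alpha>*a powr (-2)) * (u m (a*k))^2 \<le> -(\<beta>/r\<^sub>o^2 + 1) * r\<^sub>o^2"
        using s1 s2 by (rule order_trans)
      also have "\<dots> = -\<beta> - r\<^sub>o^2" using pos by (simp add: algebra_simps)
      finally have "(c1 - 1/2*\<alpha>*a powr (-2)) * (u m (a*k))^2 \<le> -\<beta> - r\<^sub>o^2" .
      moreover have "r\<^sub>o^2 > 0" "k^2 \<ge> 0" using pos by simp_all
      ultimately show ?thesis unfolding F_def by linarith
    qed
    have Fb: "F b \<ge> 0"
    proof -
      have "1/2*\<alpha>*b powr (-2) = c1/2" using b pos c1 by (simp add: pm2)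
      hence "c1 - 1/2*\<alpha>*b powr (-2) \<ge> 0" using c1 by simp
      hence "(c1 - 1/2*\<alpha>*b powr (-2)) * (u m (b*k))^2 \<ge> 0" by simp
      moreover have "k^2 < \<beta>" using kb unfolding k_def .
      ultimately show ?thesis unfolding F_def by linarith
    qed
    obtain x where x: "a \<le> x" "x \<le> b" "F x = 0" using IVT'[of F a 0 b] Fa Fb ab cont by blast
    show "\<exists>A\<^sub>o>0. (\<beta> - (kconst r\<^sub>o \<tau> \<kappa> m)^2)
                 + (3*\<kappa>^2*(1 - (kconst r\<^sub>o \<tau> \<kappa> m)^2) - 1/2 * \<alpha> * A\<^sub>o powr (-2))
                   * (u m (A\<^sub>o * kconst r\<^sub>o \<tau> \<kappa> m))^2 = 0"
      using x a unfolding F_def c1_def k_def by (intro exI[of _ x]) auto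
  qed
next
  note pos = assms(1-6)
  define c where "c = sqrt (\<alpha>/(2*(1/r\<^sub>o^2 + 3*\<kappa>^2)))"
  define C where "C = sqrt (\<alpha>/(3*\<kappa>^2))"
  have c: "c > 0" using pos unfolding c_def by (simp add: add_pos_pos)
  have ev: "\<forall>\<^sub>F m in at_bot. m \<le> min (-1) (-(\<tau>^2*r\<^sub>o/\<beta>))"
    by (rule eventually_le_at_bot)
  show "\<exists>c C. 0 < c \<and>
            (\<forall>\<^sub>F m in at_bot. \<forall>A\<^sub>o>0.
               (\<beta> - (kconst r\<^sub>o \<tau> \<kappa> m)^2)
                 + (3*\<kappa>^2*(1 - (kconst r\<^sub>o \<tau> \<kappa> m)^2) - 1/2 * \<alpha> * A\<^sub>o powr (-2))
                   * (u m (A\<^sub>o * kconst r\<^sub>o \<tau> \<kappa> m))^2 = 0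
               \<longrightarrow> c \<le> A\<^sub>o \<and> A\<^sub>o \<le> C)"
  proof (intro exI conjI)
    show "0 < c" by (fact c)
    show "\<forall>\<^sub>F m in at_bot. \<forall>A\<^sub>o>0.
               (\<beta> - (kconst r\<^sub>o \<tau> \<kappa> m)^2)
                 + (3*\<kappa>^2*(1 - (kconst r\<^sub>o \<tau> \<kappa> m)^2) - 1/2 * \<alpha> * A\<^sub>o powr (-2))
                   * (u m (A\<^sub>o * kconst r\<^sub>o \<tau> \<kappa> m))^2 = 0
               \<longrightarrow> c \<le> A\<^sub>o \<and> A\<^sub>o \<le> C"
      using ev
    proof eventually_elim
      case (elim m)
      have m: "m < 0" using elim by simp
      define k where "k = kconst r\<^sub>o \<tau> \<kappa> m"
      have k: "k > 0" unfolding k_def using kc_pos pos m by blast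
      define B where "B = 1 - 2*m/r\<^sub>o + \<kappa>^2*r\<^sub>o^2"
      have "-2*m/r\<^sub>o \<ge> 2*\<tau>^2/\<beta>" using elim pos by (simp add: field_simps)
      moreover have "\<kappa>^2*r\<^sub>o^2 \<ge> 0" "2*\<tau>^2/\<beta> > 0" using pos by simp_all
      ultimately have B: "B \<ge> 2*\<tau>^2/\<beta>" "B > 0" unfolding B_def by linarith+
      have "k^2 = \<tau>^2/B" unfolding k_def B_def using kc_sq pos m by blast
      moreover have "\<tau>^2/B \<le> \<tau>^2/(2*\<tau>^2/\<beta>)" using B pos by (intro divide_left_mono) auto
      moreover have "\<tau>^2/(2*\<tau>^2/\<beta>) = \<beta>/2" using pos by simp
      ultimately have k2b: "k^2 \<le> \<beta>/2" by (simp only:)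
      hence k2: "k^2 \<le> 1/2" using pos by simp
      show ?case
      proof (intro allI impI)
        fix A :: real assume A: "A > 0" and eq: "(\<beta> - (kconst r\<^sub>o \<tau> \<kappa> m)^2)
                 + (3*\<kappa>^2*(1 - (kconst r\<^sub>o \<tau> \<kappa> m)^2) - 1/2 * \<alpha> * A powr (-2))
                   * (u m (A * kconst r\<^sub>o \<tau> \<kappa> m))^2 = 0"
        define U where "U = (u m (A * k))^2"
        define X where "X = \<alpha>/(2*A^2)"
        have U: "U \<ge> r\<^sub>o^2" unfolding U_def using u_range[OF m, of "A*k"] A k pos
          by (simp add: power_mono)
        have "r\<^sub>o^2 > 0" using pos by simp
        hence Upos: "U > 0" using U by linarith
        have eq2: "X * U = (\<beta> - k^2) + 3*\<kappa>^2*(1-k^2)*U"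
          using eq A unfolding X_def U_def k_def by (simp add: pm2 algebra_simps)
        have "X * U > 3*\<kappa>^2/2 * U"
        proof -
          have "3*\<kappa>^2*(1-k^2)*U \<ge> 3*\<kappa>^2/2 * U" using k2 Upos pos
            by (intro mult_right_mono) (auto simp: field_simps)
          moreover have "\<beta> - k^2 > 0" using k2b pos by simp
          ultimately show ?thesis using eq2 by linarith
        qed
        hence X1: "X > 3*\<kappa>^2/2" using Upos by simp
        have e3: "3*\<kappa>^2*(1-k^2)*U = 3*\<kappa>^2*U - 3*\<kappa>^2*k^2*U" by (simp add: algebra_simps)
        have "3*\<kappa>^2*k^2*U \<ge> 0" using Upos by simp
        moreover have "k^2 \<ge> 0" by simp
        ultimately have "X * U \<le> 1 + 3*\<kappa>^2 * U" using eq2 e3 pos by linarith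
        hence "X \<le> 1/U + 3*\<kappa>^2" using Upos by (simp add: field_simps)
        moreover have "1/U \<le> 1/r\<^sub>o^2" using U pos by (simp add: frac_le)
        ultimately have X2: "X \<le> 1/r\<^sub>o^2 + 3*\<kappa>^2" by simp
        have "A^2 < \<alpha>/(3*\<kappa>^2)" using X1 A pos unfolding X_def by (simp add: field_simps)
        hence "A < C" unfolding C_def using sqrt_sq_bounds(1) A pos by simp
        moreover have "\<alpha>/(2*(1/r\<^sub>o^2 + 3*\<kappa>^2)) \<le> A^2" using X2 A pos unfolding X_def
          by (simp add: field_simps add_pos_pos)
        hence "c \<le> A" unfolding c_def using sqrt_sq_bounds(2) A pos
          by (simp add: add_pos_pos)
        ultimately show "c \<le> A \<and> A \<le> C" by simp
      qed
    qed
  qed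
qed

end
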